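(* Let $\mathcal G$ be a collection of subsets of $[n]$ such that the number of sets $C\in\mathcal G$ containing two distinct elements $i,j$ is the same for all $i\ne j$, and let $c_2=|\{C\in\mathcal G:\{1,2\}\subseteq C\}|$. Let $S$ be the sampling with $S=C$ with probability $1/|\mathcal G|$ for each $C\in\mathcal G$, assume its support is $c_1$-uniform, let $\mathbf S=\mathbf I_S$ and $\theta_{\mathbf S}=\frac1{c_1p_S}=\frac{|\mathcal G|}{c_1}$. (i) If $\mathbf W=\mathrm{diag}(w_1,\dots,w_n)\succ0$, then $$\rho\le\max_{i}\Big\{\Big(\frac{|\mathcal G|}{c_1}-1\Big)w_i+\sum_{j\ne i}w_j\Big|\frac{|\mathcal G|c_2}{c_1^2}-1\Big|\Big\}.$$ (ii) If $\mathbf W=\mathbf I$, then $$\rho=\max\Big\{\frac{|\mathcal G|}{c_1}\Big(1+(n-1)\frac{c_2}{c_1}\Big)-n,\ \frac{|\mathcal G|}{c_1}\Big(1-\frac{c_2}{c_1}\Big)\Big\}.$$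
   Context: $c_1$-uniform support: $|\{C\in\mathcal G:i\in C\}|=c_1$ for all $i\in[n]$, with $c_1\ge1$. $\mathbf I_S$ is the column submatrix of the $n\times n$ identity with columns in $S$; $e$ all-ones; $\Pi_{\mathbf S}=\mathbf S(\mathbf S^\top\mathbf W\mathbf S)^\dagger\mathbf S^\top\mathbf W$; $\rho=\lambda_{\max}\big(\mathbf W^{1/2}(\mathbb{E}[\theta_{\mathbf S}^2\Pi_{\mathbf S}ee^\top\Pi_{\mathbf S}^\top]-ee^\top)\mathbf W^{1/2}\big)$. *)

theory Defs
  imports "Jordan_Normal_Form.Matrix" "Jordan_Normal_Form.Char_Poly"
begin

(* Indices are 0-based: [n] is {0..<n}. *)

definition col_select :: "nat \<Rightarrow> nat set \<Rightarrow> real mat" where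
  "col_select n S = mat n (card S) (\<lambda>(i,j). if i = sorted_list_of_set S ! j then 1 else 0)"

definition pinv :: "real mat \<Rightarrow> real mat" where
  "pinv A = (SOME X. X \<in> carrier_mat (dim_col A) (dim_row A) \<and>
      A * X * A = A \<and> X * A * X = X \<and>
      transpose_mat (A * X) = A * X \<and> transpose_mat (X * A) = X * A)"

definition proj_W :: "real mat \<Rightarrow> real mat \<Rightarrow> real mat" where
  "proj_W W S = S * pinv (transpose_mat S * W * S) * transpose_mat S * W"

definition psd :: "real mat \<Rightarrow> bool" where
  "psd A = (A \<in> carrier_mat (dim_row A) (dim_row A) \<and> transpose_mat A = A \<and>
      (\<forall>x \<in> carrier_vec (dim_row A). 0 \<le> x \<bullet> (A *\<^sub>v x)))"

definition mat_sqrt :: "real mat \<Rightarrow> real mat" where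
  "mat_sqrt W = (SOME R. R \<in> carrier_mat (dim_row W) (dim_row W) \<and> psd R \<and> R * R = W)"

definition lambda_max :: "real mat \<Rightarrow> real" where
  "lambda_max A = Max {k. eigenvalue A k}"

definition ones_col :: "nat \<Rightarrow> real mat" where
  "ones_col n = mat n 1 (\<lambda>_. 1)"

(* Expectation is taken entrywise over the uniform distribution on G.
   rho = lambda_max (W^{1/2} (E[theta_S^2 Pi_S e e^T Pi_S^T] - e e^T) W^{1/2}),
   for S = I_C, C uniform over the finite collection G (probability 1/|G|),
   and theta_S = theta (a constant). *)
definition rho :: "nat \<Rightarrow> nat set set \<Rightarrow> real \<Rightarrow> real mat \<Rightarrow> real" where
  "rho n G theta W =
     (let e = ones_col n;
          M = (\<lambda>C. proj_W W (col_select n C) * e * transpose_mat e *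
                  transpose_mat (proj_W W (col_select n C)));
          Ex = mat n n (\<lambda>(i,j). \<Sum>C\<in>G. (1 / real (card G)) * (theta ^ 2 * M C $$ (i,j)))
      in lambda_max (mat_sqrt W * (Ex - e * transpose_mat e) * mat_sqrt W))"

end

theory Submission
  imports Defs
begin


lemma sym_real_eigenvalue_exists:
  fixes A :: "real mat"
  assumes A: "A \<in> carrier_mat n n" and n: "0 < n" and sym: "transpose_mat A = A"
  shows "\<exists>k. eigenvalue A k"
proof -
  define Ac where "Ac = map_mat complex_of_real A"
  have Ac: "Ac \<in> carrier_mat n n" using A unfolding Ac_def by auto
  have cp: "char_poly Ac = map_poly of_real (char_poly A)"
    unfolding Ac_def by (rule of_real_hom.char_poly_hom[OF A])
  have "degree (char_poly Ac) = n" unfolding cp using degree_monic_char_poly[OF A] by simp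
  then have "\<not> constant (poly (char_poly Ac))" using n by (simp add: constant_degree)
  then obtain z where z: "poly (char_poly Ac) z = 0" using fundamental_theorem_of_algebra by blast
  then have "eigenvalue Ac z" using eigenvalue_root_char_poly[OF Ac] by simp
  then obtain v where v: "v \<in> carrier_vec n" "v \<noteq> 0\<^sub>v n" "Ac *\<^sub>v v = z \<cdot>\<^sub>v v"
    unfolding eigenvalue_def eigenvector_def using Ac by auto
  have Asym: "A $$ (i,j) = A $$ (j,i)" if "i < n" "j < n" for i j
    using sym that A by (metis carrier_matD index_transpose_mat(1))
  have ev: "(\<Sum>j<n. of_real (A $$ (i,j)) * v $ j) = z * v $ i" if "i < n" for i
  proof -
    have "(Ac *\<^sub>v v) $ i = z * v $ i" using v that by simp
    moreover have "(Ac *\<^sub>v v) $ i = (\<Sum>j<n. of_real (A $$ (i,j)) * v $ j)"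
      using that Ac v(1) A unfolding Ac_def by (auto simp: scalar_prod_def lessThan_atLeast0 intro!: sum.cong)
    ultimately show ?thesis by simp
  qed
  define q where "q = (\<Sum>i<n. \<Sum>j<n. cnj (v $ i) * of_real (A $$ (i,j)) * v $ j)"
  define N where "N = (\<Sum>i<n. cnj (v $ i) * v $ i)"
  have qN: "q = z * N"
  proof -
    have "q = (\<Sum>i<n. cnj (v $ i) * (\<Sum>j<n. of_real (A $$ (i,j)) * v $ j))"
      unfolding q_def by (simp add: sum_distrib_left mult.assoc)
    also have "\<dots> = (\<Sum>i<n. cnj (v $ i) * (z * v $ i))" using ev by simp
    finally show ?thesis unfolding N_def by (simp add: sum_distrib_left algebra_simps)
  qed
  have "cnj q = (\<Sum>i<n. \<Sum>j<n. v $ i * of_real (A $$ (i,j)) * cnj (v $ j))"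
    unfolding q_def by simp
  also have "\<dots> = (\<Sum>j<n. \<Sum>i<n. v $ i * of_real (A $$ (i,j)) * cnj (v $ j))"
    by (rule sum.swap)
  also have "\<dots> = q" unfolding q_def using Asym by (auto intro!: sum.cong simp: mult.commute mult.left_commute)
  finally have qr: "Im q = 0" by (metis cnj.simps(2) complex.expand neg_equal_zero)
  have Nr: "N = of_real (\<Sum>i<n. (cmod (v $ i))^2)"
    unfolding N_def of_real_sum by (intro sum.cong refl) (metis complex_norm_square mult.commute)
  have "\<exists>i<n. v $ i \<noteq> 0" using v by (metis eq_vecI carrier_vecD index_zero_vec)
  then have Npos: "(\<Sum>i<n. (cmod (v $ i))^2) > 0"
    by (metis (no_types, lifting) finite_lessThan lessThan_iff norm_eq_zero sum_pos2 zero_less_power2 zero_le_power2)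
  have "Im z = 0"
  proof -
    have "Im q = Im z * (\<Sum>i<n. (cmod (v $ i))^2)" unfolding qN Nr by simp
    then show ?thesis using qr Npos by simp
  qed
  then have zr: "z = of_real (Re z)" by (simp add: complex_eq_iff)
  have "poly (map_poly complex_of_real (char_poly A)) (of_real (Re z)) = 0"
    using z zr unfolding cp by metis
  then have "of_real (poly (char_poly A) (Re z)) = (0::complex)"
    by (simp only: of_real_hom.poly_map_poly)
  then have "poly (char_poly A) (Re z) = 0" by simp
  then show ?thesis using eigenvalue_root_char_poly[OF A] by blast
qed

lemma col_select_carrier: "col_select n C \<in> carrier_mat n (card C)"
  unfolding col_select_def by auto

lemma col_select_index: "i < n \<Longrightarrow> k < card C \<Longrightarrow>
   col_select n C $$ (i,k) = (if i = sorted_list_of_set C ! k then 1 else 0)"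
  unfolding col_select_def by auto

lemma StWS:
  assumes C: "C \<subseteq> {0..<n}"
  shows "transpose_mat (col_select n C) * mat_diag n w * col_select n C
     = mat_diag (card C) (\<lambda>k. w (sorted_list_of_set C ! k))"
proof -
  define s where "s = sorted_list_of_set C"
  have fin: "finite C" using C finite_subset by blast
  have len: "length s = card C" and dist: "distinct s" and sets: "set s = C"
    unfolding s_def using fin by auto
  have sn: "s ! k < n" if "k < card C" for k using sets len that C nth_mem by fastforce
  define S where "S = col_select n C"
  have S: "S \<in> carrier_mat n (card C)" unfolding S_def by (rule col_select_carrier)
  have TW: "transpose_mat S * mat_diag n w = mat (card C) n (\<lambda>(k,i). S $$ (i,k) * w i)"
    by (subst mat_diag_mult_right[of _ "card C"], insert S, auto)
  show ?thesis unfolding S_def[symmetric] TW s_def[symmetric]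
  proof (rule eq_matI)
    fix k l assume kl: "k < dim_row (mat_diag (card C) (\<lambda>k. w (s ! k)))"
      "l < dim_col (mat_diag (card C) (\<lambda>k. w (s ! k)))"
    then have k: "k < card C" and l: "l < card C" by (auto simp: mat_diag_def)
    have "(mat (card C) n (\<lambda>(k,i). S $$ (i,k) * w i) * S) $$ (k,l)
        = (\<Sum>i\<in>{0..<n}. (if i = s!k then 1 else 0) * w i * (if i = s!l then 1 else 0))"
      using k l S by (auto simp: scalar_prod_def S_def col_select_index s_def intro!: sum.cong)
    also have "\<dots> = (if k = l then w (s!k) else 0)"
      using sn[OF k] sn[OF l] nth_eq_iff_index_eq[OF dist, of k l] k l len
      by (auto simp: if_distrib cong: if_cong)
    finally show "(mat (card C) n (\<lambda>(k,i). S $$ (i,k) * w i) * S) $$ (k,l)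
        = mat_diag (card C) (\<lambda>k. w (s ! k)) $$ (k,l)"
      using k l by (simp add: mat_diag_def)
  qed (insert S, auto simp: mat_diag_def s_def)
qed

lemma transpose_mat_diag[simp]: "transpose_mat (mat_diag m f) = mat_diag m f"
  by (rule eq_matI) (auto simp: mat_diag_def)

lemma pinv_diag:
  assumes d: "\<forall>k<m. d k \<noteq> (0::real)"
  shows "pinv (mat_diag m d) = mat_diag m (\<lambda>k. 1 / d k)"
proof -
  define A where "A = mat_diag m d"
  define X0 where "X0 = mat_diag m (\<lambda>k. 1 / d k)"
  have "A * X0 = mat_diag m (\<lambda>k. d k * (1 / d k))" "X0 * A = mat_diag m (\<lambda>k. (1 / d k) * d k)"
    unfolding A_def X0_def by (rule mat_diag_diag)+
  then have AX0: "A * X0 = 1\<^sub>m m" "X0 * A = 1\<^sub>m m"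
    using d by (auto intro!: eq_matI simp: mat_diag_def)
  have A: "A \<in> carrier_mat m m" and X0: "X0 \<in> carrier_mat m m" unfolding A_def X0_def by auto
  have P: "X0 \<in> carrier_mat (dim_col A) (dim_row A) \<and> A * X0 * A = A \<and> X0 * A * X0 = X0 \<and>
      transpose_mat (A * X0) = A * X0 \<and> transpose_mat (X0 * A) = X0 * A"
    using A X0 AX0 by auto
  define X where "X = pinv A"
  have PX: "X \<in> carrier_mat (dim_col A) (dim_row A) \<and> A * X * A = A \<and> X * A * X = X \<and>
      transpose_mat (A * X) = A * X \<and> transpose_mat (X * A) = X * A"
    unfolding X_def pinv_def by (rule someI[of _ X0], rule P)
  then have X: "X \<in> carrier_mat m m" and AXA: "A * X * A = A" using A by auto
  have AXAe: "A * X * A = mat m m (\<lambda>(k,l). d k * X $$ (k,l) * d l)"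
    unfolding A_def
    by (subst mat_diag_mult_left[of _ m m], insert X, simp,
        subst mat_diag_mult_right[of _ m], auto intro!: eq_matI)
  have "X = X0"
  proof (rule eq_matI)
    fix k l assume "k < dim_row X0" "l < dim_col X0"
    then have k: "k < m" and l: "l < m" using X0 by auto
    have e1: "(A * X * A) $$ (k,l) = d k * X $$ (k,l) * d l"
      using AXAe k l by simp
    have e2: "(A * X * A) $$ (k,l) = A $$ (k,l)" using AXA by simp
    have e3: "A $$ (k,l) = (if k = l then d k else 0)" using k l by (simp add: A_def mat_diag_def)
    have "d k * X $$ (k,l) * d l = (if k = l then d k else 0)" using e1 e2 e3 by simp
    then show "X $$ (k,l) = X0 $$ (k,l)"
      using d k l by (auto simp: X0_def mat_diag_def field_simps split: if_splits)
  qed (insert X X0, auto)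
  then show ?thesis unfolding X_def A_def X0_def by simp
qed

lemma sum_nth_distinct: "distinct s \<Longrightarrow> (\<Sum>k\<in>{0..<length s}. f (s ! k)) = (\<Sum>c\<in>set s. f c)"
  by (simp add: sum.distinct_set_conv_list sum_list_sum_nth)

lemma proj_diag:
  assumes C: "C \<subseteq> {0..<n}" and w: "\<forall>i<n. 0 < w i"
  shows "proj_W (mat_diag n w) (col_select n C) = mat_diag n (\<lambda>i. if i \<in> C then 1 else 0)"
proof -
  define s where "s = sorted_list_of_set C"
  have fin: "finite C" using C finite_subset by blast
  have len: "length s = card C" and dist: "distinct s" and sets: "set s = C"
    unfolding s_def using fin by auto
  have sn: "s ! k < n" if "k < card C" for k using sets len that C nth_mem by fastforce
  define S where "S = col_select n C"
  have S: "S \<in> carrier_mat n (card C)" unfolding S_def by (rule col_select_carrier)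
  have wpos: "w (s ! k) \<noteq> 0" if "k < card C" for k using w sn[OF that] by fastforce
  have pv: "pinv (transpose_mat S * mat_diag n w * S) = mat_diag (card C) (\<lambda>k. 1 / w (s ! k))"
    unfolding S_def StWS[OF C] s_def[symmetric]
    using wpos by (intro pinv_diag) blast
  have SD: "S * mat_diag (card C) (\<lambda>k. 1 / w (s ! k)) = mat n (card C) (\<lambda>(i,k). S $$ (i,k) * (1 / w (s ! k)))"
    by (rule mat_diag_mult_right[OF S])
  define P where "P = mat n (card C) (\<lambda>(i,k). S $$ (i,k) * (1 / w (s ! k))) * transpose_mat S"
  have P: "P \<in> carrier_mat n n" unfolding P_def using S by auto
  have "proj_W (mat_diag n w) S = P * mat_diag n w"
    unfolding proj_W_def pv SD P_def ..
  also have "\<dots> = mat n n (\<lambda>(i,j). P $$ (i,j) * w j)" by (rule mat_diag_mult_right[OF P])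
  also have "\<dots> = mat_diag n (\<lambda>i. if i \<in> C then 1 else 0)"
  proof (rule eq_matI)
    fix i j assume "i < dim_row (mat_diag n (\<lambda>i. if i \<in> C then 1 else 0))"
      "j < dim_col (mat_diag n (\<lambda>i. if i \<in> C then 1 else 0))"
    then have i: "i < n" and j: "j < n" by (auto simp: mat_diag_def)
    have "P $$ (i,j) = (\<Sum>k\<in>{0..<length s}. (\<lambda>c. (if i = c then 1 else 0) * (1 / w c) * (if j = c then 1 else 0)) (s ! k))"
      unfolding P_def using i j S len
      by (auto simp: scalar_prod_def S_def col_select_index s_def intro!: sum.cong)
    also have "\<dots> = (\<Sum>c\<in>C. (if i = c then 1 else 0) * (1 / w c) * (if j = c then 1 else 0))"
      using sum_nth_distinct[OF dist, of "\<lambda>c. (if i = c then 1 else 0) * (1 / w c) * (if j = c then 1 else 0)"] sets by simp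
    also have "\<dots> = (if i = j \<and> i \<in> C then 1 / w i else 0)"
      using fin by (auto simp: if_distrib cong: if_cong)
    finally show "mat n n (\<lambda>(i,j). P $$ (i,j) * w j) $$ (i,j) = mat_diag n (\<lambda>i. if i \<in> C then 1 else 0) $$ (i,j)"
      using i j w by (auto simp: mat_diag_def)
  qed (auto simp: mat_diag_def)
  finally show ?thesis unfolding S_def .
qed

lemma M_diag: "mat_diag n f * ones_col n * transpose_mat (ones_col n) * transpose_mat (mat_diag n f)
   = mat n n (\<lambda>(i,j). f i * (f j :: real))"
proof -
  have e: "ones_col n \<in> carrier_mat n 1" unfolding ones_col_def by auto
  have 1: "mat_diag n f * ones_col n = mat n 1 (\<lambda>(i,j). f i)"
    by (subst mat_diag_mult_left[OF e]) (auto intro!: eq_matI simp: ones_col_def)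
  have 2: "mat n 1 (\<lambda>(i,j). f i) * transpose_mat (ones_col n) = mat n n (\<lambda>(i,j). f i)"
    by (rule eq_matI) (auto simp: ones_col_def scalar_prod_def)
  show ?thesis unfolding 1 2 transpose_mat_diag
    by (subst mat_diag_mult_right[of _ n]) (auto intro!: eq_matI)
qed

lemma dim_mat_diag[simp]: "dim_row (mat_diag n f) = n" "dim_col (mat_diag n f) = n"
  by (auto simp: mat_diag_def)

lemma if_mult_zero: "(if P then a else 0) * (b::real) = (if P then a * b else 0)" by simp

lemma psd_sqrt_diag:
  assumes w: "\<forall>i<n. 0 \<le> w i"
  shows "\<exists>R. R \<in> carrier_mat n n \<and> psd R \<and> R * R = mat_diag n w"
proof (intro exI conjI)
  define R where "R = mat_diag n (\<lambda>i. sqrt (w i))"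
  show R: "R \<in> carrier_mat n n" unfolding R_def by simp
  show "R * R = mat_diag n w" unfolding R_def mat_diag_diag
    using w by (auto intro!: eq_matI simp: mat_diag_def)
  have "0 \<le> x \<bullet> (R *\<^sub>v x)" if x: "x \<in> carrier_vec n" for x
  proof -
    have "x \<bullet> (R *\<^sub>v x) = (\<Sum>i\<in>{0..<n}. x $ i * (sqrt (w i) * x $ i))"
      using x R unfolding R_def
      by (auto simp: scalar_prod_def mat_diag_def if_mult_zero intro!: sum.cong)
    also have "\<dots> \<ge> 0"
    proof (intro sum_nonneg)
      fix i assume "i \<in> {0..<n}"
      then have "0 \<le> sqrt (w i)" using w by simp
      then show "0 \<le> x $ i * (sqrt (w i) * x $ i)"
        by (metis mult.left_commute mult_nonneg_nonneg zero_le_square)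
    qed
    finally show ?thesis .
  qed
  then show "psd R" using R unfolding psd_def R_def by auto
qed

lemma mat_sqrt_diag:
  assumes w: "\<forall>i<n. 0 \<le> w i"
  shows "mat_sqrt (mat_diag n w) \<in> carrier_mat n n \<and> psd (mat_sqrt (mat_diag n w)) \<and>
    mat_sqrt (mat_diag n w) * mat_sqrt (mat_diag n w) = mat_diag n w"
proof -
  have d: "dim_row (mat_diag n w) = n" by (simp add: mat_diag_def)
  show ?thesis unfolding mat_sqrt_def d by (rule someI_ex, rule psd_sqrt_diag[OF w])
qed

lemma mat_sqrt_one: "mat_sqrt (1\<^sub>m n) = 1\<^sub>m n"
proof -
  define R where "R = mat_sqrt (1\<^sub>m n)"
  have "R \<in> carrier_mat n n \<and> psd R \<and> R * R = 1\<^sub>m n"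
    using mat_sqrt_diag[of n "\<lambda>_. 1"] unfolding R_def by simp
  then have R: "R \<in> carrier_mat n n" and ps: "psd R" and RR: "R * R = 1\<^sub>m n" by auto
  have fix1: "R *\<^sub>v z = z" if z: "z \<in> carrier_vec n" for z
  proof -
    define y where "y = R *\<^sub>v z"
    have y: "y \<in> carrier_vec n" unfolding y_def using R z by auto
    have Ry: "R *\<^sub>v y = z"
    proof -
      have "R *\<^sub>v y = (R * R) *\<^sub>v z" unfolding y_def
        by (rule assoc_mult_mat_vec[symmetric, of _ n n _ n]) (use R z in auto)
      then show ?thesis using RR z by simp
    qed
    define d where "d = vec n (\<lambda>i. y $ i - z $ i)"
    have d: "d \<in> carrier_vec n" unfolding d_def by auto
    have Rd: "(R *\<^sub>v d) $ i = - d $ i" if i: "i < n" for i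
    proof -
      have "(R *\<^sub>v d) $ i = (\<Sum>k\<in>{0..<n}. R $$ (i,k) * y $ k) - (\<Sum>k\<in>{0..<n}. R $$ (i,k) * z $ k)"
        using i R y z unfolding d_def by (auto simp: scalar_prod_def sum_subtractf[symmetric] algebra_simps)
      also have "(\<Sum>k\<in>{0..<n}. R $$ (i,k) * y $ k) = (R *\<^sub>v y) $ i" using i R y by (auto simp: scalar_prod_def)
      also have "(\<Sum>k\<in>{0..<n}. R $$ (i,k) * z $ k) = (R *\<^sub>v z) $ i" using i R z by (auto simp: scalar_prod_def)
      finally show ?thesis unfolding Ry y_def[symmetric] d_def using i by simp
    qed
    have "0 \<le> d \<bullet> (R *\<^sub>v d)" using ps d R unfolding psd_def by auto
    also have "d \<bullet> (R *\<^sub>v d) = - (\<Sum>i\<in>{0..<n}. (d $ i)^2)"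
      using d R Rd by (simp add: scalar_prod_def sum_negf[symmetric] power2_eq_square)
    finally have "(\<Sum>i\<in>{0..<n}. (d $ i)^2) \<le> 0" by simp
    moreover have "0 \<le> (\<Sum>i\<in>{0..<n}. (d $ i)^2)" by (rule sum_nonneg) simp
    ultimately have "(\<Sum>i\<in>{0..<n}. (d $ i)^2) = 0" by linarith
    then have "\<forall>i\<in>{0..<n}. (d $ i)^2 = 0"
      by (subst sum_nonneg_eq_0_iff[symmetric]) auto
    then have "y $ i = z $ i" if "i < n" for i using that unfolding d_def by auto
    then show ?thesis unfolding y_def[symmetric] using y z by (intro eq_vecI) auto
  qed
  have "R = 1\<^sub>m n"
  proof (rule eq_matI)
    fix i j assume "i < dim_row (1\<^sub>m n :: real mat)" "j < dim_col (1\<^sub>m n :: real mat)"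
    then have i: "i < n" and j: "j < n" by auto
    have "(R *\<^sub>v unit_vec n j) $ i = R $$ (i,j)"
      using R i j by (simp add: scalar_prod_def unit_vec_def if_distrib cong: if_cong)
    then show "R $$ (i,j) = 1\<^sub>m n $$ (i,j)" using fix1[of "unit_vec n j"] i j by simp
  qed (use R in auto)
  then show ?thesis unfolding R_def .
qed

lemma nz_vec: assumes "v \<in> carrier_vec n" "v \<noteq> 0\<^sub>v n" shows "\<exists>i<n. v $ i \<noteq> (0::'a::zero)"
proof (rule ccontr)
  assume "\<not> ?thesis"
  then have "v = 0\<^sub>v n" using assms(1) by (intro eq_vecI) auto
  then show False using assms(2) by simp
qed

lemma gersh:
  fixes R B :: "real mat"
  assumes R: "R \<in> carrier_mat n n" and RR: "R * R = mat_diag n w"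
    and w: "\<forall>i<n. 0 \<le> w i"
    and B: "B = mat n n (\<lambda>(i,j). if i = j then p else q)"
    and ev: "eigenvalue (R * B * R) lam"
  shows "lam = 0 \<or> (\<exists>i<n. lam \<le> p * w i + (\<Sum>j\<in>{0..<n}-{i}. w j) * \<bar>q\<bar>)"
proof -
  have Bc: "B \<in> carrier_mat n n" unfolding B by auto
  have RBR: "R * B * R \<in> carrier_mat n n" using R Bc by auto
  obtain v where v: "v \<in> carrier_vec n" "v \<noteq> 0\<^sub>v n" "(R * B * R) *\<^sub>v v = lam \<cdot>\<^sub>v v"
    using ev RBR unfolding eigenvalue_def eigenvector_def by auto
  define z where "z = B *\<^sub>v (R *\<^sub>v v)"
  have z: "z \<in> carrier_vec n" unfolding z_def using Bc R v by auto
  have Rz: "R *\<^sub>v z = lam \<cdot>\<^sub>v v"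
  proof -
    have "(R * B * R) *\<^sub>v v = (R * B) *\<^sub>v (R *\<^sub>v v)"
      by (rule assoc_mult_mat_vec[of _ n n _ n]) (use R Bc v(1) in auto)
    also have "\<dots> = R *\<^sub>v (B *\<^sub>v (R *\<^sub>v v))"
      by (rule assoc_mult_mat_vec[of _ n n _ n]) (use R Bc v(1) in auto)
    finally have h: "(R * B * R) *\<^sub>v v = R *\<^sub>v (B *\<^sub>v (R *\<^sub>v v))" .
    show ?thesis unfolding z_def h[symmetric] by (rule v(3))
  qed
  show ?thesis
  proof (cases "z = 0\<^sub>v n")
    case True
    have "R *\<^sub>v 0\<^sub>v n = 0\<^sub>v n" using R by (intro eq_vecI) (auto simp: scalar_prod_def)
    then have "lam \<cdot>\<^sub>v v = 0\<^sub>v n" using Rz True by auto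
    moreover obtain i where "i < n" "v $ i \<noteq> 0" using nz_vec[OF v(1,2)] by blast
    ultimately have "lam * v $ i = 0" using v(1) by (metis index_smult_vec(1) index_zero_vec(1) carrier_vecD)
    then show ?thesis using \<open>v $ i \<noteq> 0\<close> by simp
  next
    case False
    have BW: "B * mat_diag n w = mat n n (\<lambda>(i,j). B $$ (i,j) * w j)"
      by (rule mat_diag_mult_right[OF Bc])
    have "(B * mat_diag n w) *\<^sub>v z = B *\<^sub>v (R *\<^sub>v (R *\<^sub>v z))"
    proof -
      have RRc: "R * R \<in> carrier_mat n n" using R by auto
      have "(B * (R * R)) *\<^sub>v z = B *\<^sub>v ((R * R) *\<^sub>v z)"
        by (rule assoc_mult_mat_vec[of _ n n _ n]) (use RRc Bc z in auto)
      also have "(R * R) *\<^sub>v z = R *\<^sub>v (R *\<^sub>v z)"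
        by (rule assoc_mult_mat_vec[of _ n n _ n]) (use R z in auto)
      finally show ?thesis unfolding RR[symmetric] .
    qed
    also have "\<dots> = B *\<^sub>v (R *\<^sub>v (lam \<cdot>\<^sub>v v))" by (simp only: Rz)
    also have "\<dots> = lam \<cdot>\<^sub>v z" unfolding z_def
      using mult_mat_vec[OF R v(1)] mult_mat_vec[OF Bc, of "R *\<^sub>v v"] R v(1) by simp
    finally have BWz: "(B * mat_diag n w) *\<^sub>v z = lam \<cdot>\<^sub>v z" .
    have comp: "(\<Sum>j\<in>{0..<n}. B $$ (i,j) * w j * z $ j) = lam * z $ i" if "i < n" for i
    proof -
      have "((B * mat_diag n w) *\<^sub>v z) $ i = lam * z $ i" using BWz that z by simp
      moreover have "((B * mat_diag n w) *\<^sub>v z) $ i = (\<Sum>j\<in>{0..<n}. B $$ (i,j) * w j * z $ j)"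
        unfolding BW using that z by (auto simp: scalar_prod_def intro!: sum.cong)
      ultimately show ?thesis by simp
    qed
    define M where "M = Max ((\<lambda>j. \<bar>z $ j\<bar>) ` {0..<n})"
    obtain j1 where j1: "j1 < n" "z $ j1 \<noteq> 0" using nz_vec[OF z False] by blast
    have nne: "{0..<n} \<noteq> {}" using j1 by auto
    have "M \<in> (\<lambda>j. \<bar>z $ j\<bar>) ` {0..<n}" unfolding M_def using nne by (intro Max_in) auto
    then obtain i0 where i0: "i0 < n" "M = \<bar>z $ i0\<bar>" by auto
    have Mge: "\<bar>z $ j\<bar> \<le> M" if "j < n" for j unfolding M_def using that by (intro Max_ge) auto
    have Mpos: "M > 0"
      using Mge[of j1] j1 by linarith
    have "lam * z $ i0 = (\<Sum>j\<in>{0..<n}. B $$ (i0,j) * w j * z $ j)" using comp[OF i0(1)] by simp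
    also have "\<dots> = B $$ (i0,i0) * w i0 * z $ i0 + (\<Sum>j\<in>{0..<n}-{i0}. B $$ (i0,j) * w j * z $ j)"
      using i0 by (subst sum.remove[of _ i0]) auto
    also have "(\<Sum>j\<in>{0..<n}-{i0}. B $$ (i0,j) * w j * z $ j) = q * (\<Sum>j\<in>{0..<n}-{i0}. w j * z $ j)"
      unfolding B using i0 by (auto simp: sum_distrib_left intro!: sum.cong)
    finally have eq: "(lam - p * w i0) * z $ i0 = q * (\<Sum>j\<in>{0..<n}-{i0}. w j * z $ j)"
      using i0 unfolding B by (simp add: algebra_simps)
    have "\<bar>\<Sum>j\<in>{0..<n}-{i0}. w j * z $ j\<bar> \<le> (\<Sum>j\<in>{0..<n}-{i0}. w j * M)"
    proof -
      have "\<bar>\<Sum>j\<in>{0..<n}-{i0}. w j * z $ j\<bar> \<le> (\<Sum>j\<in>{0..<n}-{i0}. \<bar>w j * z $ j\<bar>)"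
        by (rule sum_abs)
      also have "\<dots> \<le> (\<Sum>j\<in>{0..<n}-{i0}. w j * M)"
        using w Mge by (intro sum_mono) (auto simp: abs_mult intro!: mult_left_mono)
      finally show ?thesis .
    qed
    then have "\<bar>(lam - p * w i0) * z $ i0\<bar> \<le> \<bar>q\<bar> * ((\<Sum>j\<in>{0..<n}-{i0}. w j) * M)"
      unfolding eq abs_mult sum_distrib_right[symmetric] by (simp add: mult_left_mono)
    then have "\<bar>lam - p * w i0\<bar> * M \<le> (\<bar>q\<bar> * (\<Sum>j\<in>{0..<n}-{i0}. w j)) * M"
      unfolding abs_mult i0(2) by (simp add: mult.assoc)
    then have "\<bar>lam - p * w i0\<bar> \<le> \<bar>q\<bar> * (\<Sum>j\<in>{0..<n}-{i0}. w j)"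
      using Mpos by (simp add: mult_le_cancel_right)
    then show ?thesis using i0 by (intro disjI2 exI[of _ i0]) (auto simp: mult.commute)
  qed
qed

lemma B_entry:
  fixes p q :: real
  assumes v: "v \<in> carrier_vec n" and i: "i < n"
  shows "(mat n n (\<lambda>(i,j). if i = j then p else q) *\<^sub>v v) $ i = (p - q) * v $ i + q * (\<Sum>j\<in>{0..<n}. v $ j)"
proof -
  have "(mat n n (\<lambda>(i,j). if i = j then p else q) *\<^sub>v v) $ i = (\<Sum>j\<in>{0..<n}. ((if i = j then p - q else 0) + q) * v $ j)"
    using v i by (auto simp: scalar_prod_def diff_add_cancel intro!: sum.cong)
  also have "\<dots> = (\<Sum>j\<in>{0..<n}. (if i = j then (p - q) * v $ j else 0)) + (\<Sum>j\<in>{0..<n}. q * v $ j)"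
    by (simp add: distrib_right sum.distrib if_mult_zero)
  also have "\<dots> = (p - q) * v $ i + q * (\<Sum>j\<in>{0..<n}. v $ j)"
    using i by (simp add: sum_distrib_left)
  finally show ?thesis .
qed

lemma eig_B:
  fixes p q :: real
  assumes n: "2 \<le> n"
  shows "{k. eigenvalue (mat n n (\<lambda>(i,j). if i = j then p else q)) k} = {p - q, p - q + real n * q}"
proof -
  define B where "B = mat n n (\<lambda>(i,j). if i = j then p else (q::real))"
  have Bc: "B \<in> carrier_mat n n" unfolding B_def by auto
  have sub: "k \<in> {p - q, p - q + real n * q}" if evk: "eigenvalue B k" for k
  proof -
    obtain v where v: "v \<in> carrier_vec n" "v \<noteq> 0\<^sub>v n" "B *\<^sub>v v = k \<cdot>\<^sub>v v"
      using evk Bc unfolding eigenvalue_def eigenvector_def by auto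
    define s where "s = (\<Sum>j\<in>{0..<n}. v $ j)"
    have e: "(p - q) * v $ i + q * s = k * v $ i" if "i < n" for i
    proof -
      have "(B *\<^sub>v v) $ i = k * v $ i" using v that by simp
      then show ?thesis using B_entry[OF v(1) that, of p q] unfolding B_def s_def by simp
    qed
    show ?thesis
    proof (cases "s = 0")
      case True
      obtain i where "i < n" "v $ i \<noteq> 0" using nz_vec[OF v(1,2)] by blast
      then show ?thesis using e[of i] True by simp
    next
      case False
      have "(\<Sum>i\<in>{0..<n}. (p - q) * v $ i + q * s) = (\<Sum>i\<in>{0..<n}. k * v $ i)"
        using e by simp
      then have "(p - q) * s + real n * q * s = k * s"
        unfolding s_def by (simp add: sum.distrib sum_distrib_left[symmetric])
      then have "((p - q) + real n * q) * s = k * s" by (simp add: algebra_simps)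
      then show ?thesis using False by simp
    qed
  qed
  have ev1: "eigenvalue B (p - q)"
  proof -
    define v where "v = vec n (\<lambda>i. if i = 0 then 1 else if i = 1 then -1 else (0::real))"
    have v: "v \<in> carrier_vec n" unfolding v_def by simp
    have s: "(\<Sum>j\<in>{0..<n}. v $ j) = 0"
    proof -
      have "(\<Sum>j\<in>{0..<n}. v $ j) = (\<Sum>j\<in>{0..<n}. (if j = 0 then 1 else 0) + (if j = 1 then -1 else (0::real)))"
        unfolding v_def by (intro sum.cong) auto
      also have "\<dots> = 0" using n by (simp add: sum.distrib)
      finally show ?thesis .
    qed
    have "v $ 0 = 1" using n unfolding v_def by simp
    have "v \<noteq> 0\<^sub>v n"
    proof
      assume "v = 0\<^sub>v n"
      then have "v $ 0 = 0" using n by simp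
      then show False using \<open>v $ 0 = 1\<close> by simp
    qed
    moreover have "B *\<^sub>v v = (p - q) \<cdot>\<^sub>v v"
    proof (rule eq_vecI)
      fix i assume "i < dim_vec ((p - q) \<cdot>\<^sub>v v)" then have i: "i < n" using v by simp
      show "(B *\<^sub>v v) $ i = ((p - q) \<cdot>\<^sub>v v) $ i"
        using B_entry[OF v i, of p q] s i v unfolding B_def by simp
    qed (use v Bc in simp)
    ultimately show ?thesis using v Bc unfolding eigenvalue_def eigenvector_def by auto
  qed
  have ev2: "eigenvalue B (p - q + real n * q)"
  proof -
    define v where "v = vec n (\<lambda>i. (1::real))"
    have v: "v \<in> carrier_vec n" unfolding v_def by simp
    have s: "(\<Sum>j\<in>{0..<n}. v $ j) = real n" unfolding v_def by simp
    have "v $ 0 = 1" using n unfolding v_def by simp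
    have "v \<noteq> 0\<^sub>v n"
    proof
      assume "v = 0\<^sub>v n"
      then have "v $ 0 = 0" using n by simp
      then show False using \<open>v $ 0 = 1\<close> by simp
    qed
    moreover have "B *\<^sub>v v = (p - q + real n * q) \<cdot>\<^sub>v v"
    proof (rule eq_vecI)
      fix i assume "i < dim_vec ((p - q + real n * q) \<cdot>\<^sub>v v)" then have i: "i < n" using v by simp
      have vi: "v $ i = 1" using i unfolding v_def by simp
      show "(B *\<^sub>v v) $ i = ((p - q + real n * q) \<cdot>\<^sub>v v) $ i"
        using B_entry[OF v i, of p q] s i v vi unfolding B_def by (simp add: algebra_simps)
    qed (use v Bc in simp)
    ultimately show ?thesis using v Bc unfolding eigenvalue_def eigenvector_def by auto
  qed
  show ?thesis unfolding B_def[symmetric] using sub ev1 ev2 by auto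
qed



lemma rho_formula:
  assumes finG: "finite G" and sub: "\<forall>C\<in>G. C \<subseteq> {0..<n}" and w: "\<forall>i<n. 0 < w i"
  shows "rho n G th (mat_diag n w) = lambda_max (mat_sqrt (mat_diag n w) *
     mat n n (\<lambda>(i,j). th^2 / real (card G) * real (card {C\<in>G. i \<in> C \<and> j \<in> C}) - 1) *
     mat_sqrt (mat_diag n w))"
proof -
  define e where "e = ones_col n"
  define M where "M = (\<lambda>C. proj_W (mat_diag n w) (col_select n C) * e * transpose_mat e *
                  transpose_mat (proj_W (mat_diag n w) (col_select n C)))"
  have MC: "M C $$ (i,j) = (if i \<in> C \<and> j \<in> C then 1 else 0)" if "C \<in> G" "i < n" "j < n" for C i j
  proof -
    have "M C = mat n n (\<lambda>(i,j). (if i \<in> C then 1 else 0) * (if j \<in> C then 1 else 0))"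
      unfolding M_def e_def proj_diag[OF sub[rule_format, OF that(1)] w] by (rule M_diag)
    then show ?thesis using that by simp
  qed
  have ee: "(e * transpose_mat e) $$ (i,j) = 1" if "i < n" "j < n" for i j
    using that unfolding e_def ones_col_def by (simp add: scalar_prod_def)
  have Ex: "mat n n (\<lambda>(i,j). \<Sum>C\<in>G. (1 / real (card G)) * (th ^ 2 * M C $$ (i,j))) - e * transpose_mat e
     = mat n n (\<lambda>(i,j). th^2 / real (card G) * real (card {C\<in>G. i \<in> C \<and> j \<in> C}) - 1)"
  proof (rule eq_matI)
    fix i j assume "i < dim_row (mat n n (\<lambda>(i,j). th^2 / real (card G) * real (card {C\<in>G. i \<in> C \<and> j \<in> C}) - 1))"
      "j < dim_col (mat n n (\<lambda>(i,j). th^2 / real (card G) * real (card {C\<in>G. i \<in> C \<and> j \<in> C}) - 1))"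
    then have i: "i < n" and j: "j < n" by auto
    have "(\<Sum>C\<in>G. (1 / real (card G)) * (th ^ 2 * M C $$ (i,j)))
        = (\<Sum>C\<in>G. th^2 / real (card G) * (if i \<in> C \<and> j \<in> C then 1 else 0))"
      using MC i j by (intro sum.cong) auto
    also have "\<dots> = th^2 / real (card G) * (\<Sum>C\<in>G. (if i \<in> C \<and> j \<in> C then 1 else 0))"
      by (simp add: sum_distrib_left)
    also have "(\<Sum>C\<in>G. (if i \<in> C \<and> j \<in> C then 1 else 0)) = (\<Sum>C\<in>{C\<in>G. i \<in> C \<and> j \<in> C}. (1::real))"
      using finG by (simp only: sum.inter_filter)
    finally have s: "(\<Sum>C\<in>G. (1 / real (card G)) * (th ^ 2 * M C $$ (i,j)))
        = th^2 / real (card G) * real (card {C\<in>G. i \<in> C \<and> j \<in> C})" by simp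
    have ec: "e * transpose_mat e \<in> carrier_mat n n" unfolding e_def ones_col_def by auto
    show "(mat n n (\<lambda>(i,j). \<Sum>C\<in>G. (1 / real (card G)) * (th ^ 2 * M C $$ (i,j))) - e * transpose_mat e) $$ (i,j)
       = mat n n (\<lambda>(i,j). th^2 / real (card G) * real (card {C\<in>G. i \<in> C \<and> j \<in> C}) - 1) $$ (i,j)"
    proof -
      have d: "dim_row (e * transpose_mat e) = n" "dim_col (e * transpose_mat e) = n" using ec by auto
      show ?thesis using i j d s ee[OF i j] by (simp add: index_minus_mat)
    qed
  qed (auto simp: e_def ones_col_def)
  have "rho n G th (mat_diag n w) = lambda_max (mat_sqrt (mat_diag n w) *
     (mat n n (\<lambda>(i,j). \<Sum>C\<in>G. (1 / real (card G)) * (th ^ 2 * M C $$ (i,j))) - e * transpose_mat e) *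
     mat_sqrt (mat_diag n w))"
    unfolding rho_def Let_def M_def e_def by simp
  then show ?thesis unfolding Ex .
qed

lemma eig_fin:
  assumes A: "(A :: real mat) \<in> carrier_mat n n"
  shows "finite {k. eigenvalue A k}"
proof -
  have "char_poly A \<noteq> 0" using degree_monic_char_poly[OF A] by auto
  then have "finite {k. poly (char_poly A) k = 0}" by (rule poly_roots_finite)
  then show ?thesis using eigenvalue_root_char_poly[OF A] by simp
qed

theorem theorem4p19:
  fixes n c1 :: nat and G :: "nat set set" and w :: "nat \<Rightarrow> real"
  assumes n2: "2 \<le> n"
    and G_sub: "\<forall>C\<in>G. C \<subseteq> {0..<n}"
    and pair_const: "\<forall>i<n. \<forall>j<n. \<forall>k<n. \<forall>l<n. i \<noteq> j \<longrightarrow> k \<noteq> l \<longrightarrow>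
        card {C\<in>G. i \<in> C \<and> j \<in> C} = card {C\<in>G. k \<in> C \<and> l \<in> C}"
    and c1_pos: "1 \<le> c1"
    and uniform: "\<forall>i<n. card {C\<in>G. i \<in> C} = c1"
  defines "c2 \<equiv> card {C\<in>G. {0, 1} \<subseteq> C}"
    and "\<theta> \<equiv> real (card G) / real c1"
  shows "((\<forall>i<n. 0 < w i) \<longrightarrow>
           rho n G \<theta> (mat_diag n w) \<le>
           Max ((\<lambda>i. (real (card G) / real c1 - 1) * w i +
                 (\<Sum>j\<in>{0..<n} - {i}. w j) *
                   \<bar>real (card G) * real c2 / (real c1)^2 - 1\<bar>) ` {0..<n}))
       \<and> rho n G \<theta> (1\<^sub>m n) =
           max (real (card G) / real c1 * (1 + (real n - 1) * real c2 / real c1) - real n)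
               (real (card G) / real c1 * (1 - real c2 / real c1))"
proof -
  have finG: "finite G"
  proof (rule finite_subset)
    show "G \<subseteq> Pow {0..<n}" using G_sub by auto
  qed simp
  have n0: "0 < n" "1 < n" using n2 by auto
  have cardC: "card {C\<in>G. i \<in> C \<and> j \<in> C} = (if i = j then c1 else c2)" if "i < n" "j < n" for i j
  proof (cases "i = j")
    case True
    then show ?thesis using uniform that by simp
  next
    case False
    have "card {C\<in>G. i \<in> C \<and> j \<in> C} = card {C\<in>G. 0 \<in> C \<and> 1 \<in> C}"
      using pair_const[rule_format, of i j 0 1] that False n0 by simp
    also have "{C\<in>G. 0 \<in> C \<and> 1 \<in> C} = {C\<in>G. {0, 1} \<subseteq> C}" by auto
    finally show ?thesis using False unfolding c2_def by simp
  qed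
  have c1G: "c1 \<le> card G"
  proof -
    have "card {C\<in>G. 0 \<in> C} \<le> card G" using finG by (intro card_mono) auto
    then show ?thesis using uniform n0 by simp
  qed
  have Gpos: "0 < card G" using c1G c1_pos by simp
  have th1: "1 \<le> \<theta>" unfolding \<theta>_def using c1G c1_pos by simp
  define a where "a = real (card G) * real c2 / (real c1)^2"
  define B where "B = mat n n (\<lambda>(i,j). if i = j then \<theta> - 1 else a - 1)"
  have Beq: "rho n G \<theta> (mat_diag n w') = lambda_max (mat_sqrt (mat_diag n w') * B * mat_sqrt (mat_diag n w'))"
    if w': "\<forall>i<n. 0 < w' i" for w'
  proof -
    have "mat n n (\<lambda>(i,j). \<theta>^2 / real (card G) * real (card {C\<in>G. i \<in> C \<and> j \<in> C}) - 1) = B"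
    proof (rule eq_matI)
      fix i j assume "i < dim_row B" "j < dim_col B"
      then have i: "i < n" and j: "j < n" unfolding B_def by auto
      have 1: "\<theta>^2 / real (card G) * real c1 = \<theta>" unfolding \<theta>_def using Gpos c1_pos
        by (simp add: field_simps power2_eq_square)
      have 2: "\<theta>^2 / real (card G) * real c2 = a" unfolding \<theta>_def a_def using Gpos c1_pos
        by (simp add: field_simps power2_eq_square)
      show "mat n n (\<lambda>(i,j). \<theta>^2 / real (card G) * real (card {C\<in>G. i \<in> C \<and> j \<in> C}) - 1) $$ (i,j) = B $$ (i,j)"
        using i j cardC[OF i j] 1 2 unfolding B_def by simp
    qed (auto simp: B_def)
    then show ?thesis using rho_formula[OF finG G_sub w', of \<theta>] by simp
  qed
  have Bc: "B \<in> carrier_mat n n" unfolding B_def by simp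
  have BT: "transpose_mat B = B" unfolding B_def by (rule eq_matI) auto
  have part1: "rho n G \<theta> (mat_diag n w) \<le>
           Max ((\<lambda>i. (real (card G) / real c1 - 1) * w i +
                 (\<Sum>j\<in>{0..<n} - {i}. w j) *
                   \<bar>real (card G) * real c2 / (real c1)^2 - 1\<bar>) ` {0..<n})"
    if w: "\<forall>i<n. 0 < w i"
  proof -
    define f where "f = (\<lambda>i. (real (card G) / real c1 - 1) * w i +
                 (\<Sum>j\<in>{0..<n} - {i}. w j) *
                   \<bar>real (card G) * real c2 / (real c1)^2 - 1\<bar>)"
    define R where "R = mat_sqrt (mat_diag n w)"
    have w0: "\<forall>i<n. 0 \<le> w i" using w by (simp add: less_imp_le)
    have R: "R \<in> carrier_mat n n" and psR: "psd R" and RR: "R * R = mat_diag n w"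
      using mat_sqrt_diag[OF w0] unfolding R_def by auto
    have RT: "transpose_mat R = R" using psR unfolding psd_def by auto
    define A where "A = R * B * R"
    have A: "A \<in> carrier_mat n n" unfolding A_def using R Bc by auto
    have AT: "transpose_mat A = A"
    proof -
      have "transpose_mat A = transpose_mat R * transpose_mat (R * B)"
        unfolding A_def by (rule transpose_mult[of _ n n]) (use R Bc in auto)
      also have "transpose_mat (R * B) = transpose_mat B * transpose_mat R"
        by (rule transpose_mult[of _ n n]) (use R Bc in auto)
      finally show ?thesis unfolding RT BT A_def using R Bc by simp
    qed
    have fin: "finite {k. eigenvalue A k}" by (rule eig_fin[OF A])
    have ne: "{k. eigenvalue A k} \<noteq> {}" using sym_real_eigenvalue_exists[OF A n0(1) AT] by auto
    have fM: "f i \<le> Max (f ` {0..<n})" if "i < n" for i using that by (intro Max_ge) auto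
    have f0: "0 \<le> f 0"
    proof -
      have "0 \<le> (real (card G) / real c1 - 1) * w 0" using th1 w0 n0 unfolding \<theta>_def by simp
      moreover have "0 \<le> (\<Sum>j\<in>{0..<n} - {0}. w j)" using w0 by (intro sum_nonneg) auto
      ultimately show ?thesis unfolding f_def by simp
    qed
    have "Max {k. eigenvalue A k} \<le> Max (f ` {0..<n})"
    proof (rule Max.boundedI[OF fin ne])
      fix lam assume "lam \<in> {k. eigenvalue A k}"
      then have ev: "eigenvalue (R * B * R) lam" unfolding A_def by simp
      have "lam = 0 \<or> (\<exists>i<n. lam \<le> (\<theta> - 1) * w i + (\<Sum>j\<in>{0..<n}-{i}. w j) * \<bar>a - 1\<bar>)"
        by (rule gersh[OF R RR w0 B_def ev])
      then show "lam \<le> Max (f ` {0..<n})"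
      proof
        assume "lam = 0" then show ?thesis using f0 fM[OF n0(1)] by simp
      next
        assume "\<exists>i<n. lam \<le> (\<theta> - 1) * w i + (\<Sum>j\<in>{0..<n}-{i}. w j) * \<bar>a - 1\<bar>"
        then obtain i where "i < n" "lam \<le> f i" unfolding f_def a_def \<theta>_def by auto
        then show ?thesis using fM by (meson order_trans)
      qed
    qed
    then show ?thesis using Beq[OF w] unfolding lambda_max_def A_def R_def f_def by simp
  qed
  have part2: "rho n G \<theta> (1\<^sub>m n) =
           max (real (card G) / real c1 * (1 + (real n - 1) * real c2 / real c1) - real n)
               (real (card G) / real c1 * (1 - real c2 / real c1))"
  proof -
    have "rho n G \<theta> (1\<^sub>m n) = lambda_max (mat_sqrt (1\<^sub>m n) * B * mat_sqrt (1\<^sub>m n))"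
      using Beq[of "\<lambda>_. 1"] by simp
    also have "mat_sqrt (1\<^sub>m n) * B * mat_sqrt (1\<^sub>m n) = B"
      unfolding mat_sqrt_one using Bc by simp
    also have "lambda_max B = Max {(\<theta> - 1) - (a - 1), (\<theta> - 1) - (a - 1) + real n * (a - 1)}"
      unfolding lambda_max_def B_def eig_B[OF n2] ..
    also have "\<dots> = max ((\<theta> - 1) - (a - 1) + real n * (a - 1)) ((\<theta> - 1) - (a - 1))"
      by (simp add: max.commute)
    also have "(\<theta> - 1) - (a - 1) + real n * (a - 1) = real (card G) / real c1 * (1 + (real n - 1) * real c2 / real c1) - real n"
      unfolding \<theta>_def a_def using c1_pos by (simp add: field_simps power2_eq_square)
    also have "(\<theta> - 1) - (a - 1) = real (card G) / real c1 * (1 - real c2 / real c1)"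
      unfolding \<theta>_def a_def using c1_pos by (simp add: field_simps power2_eq_square)
    finally show ?thesis .
  qed
  show ?thesis using part1 part2 by blast
qed

end
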